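(* $(\widetilde{W}_{\tilde v},\prec_{\tilde o^*})$ does not admit a regular nice labeling. Consequently, Thiagarajan's conjecture (a prime event structure is isomorphic to the event structure of a finite 1-safe Petri net if and only if it is regular; equivalently, an event structure is regular if and only if it is a regular trace event structure) is false.
   Context: Let $\mathbf{X}$ be Wise's complete square complex (from Wise, "Complete square complexes"): a $VH$-complex with a single vertex, three vertical edges colored $a,b,c$, two horizontal edges colored $x,y$, and six squares, with horizontal edges oriented left to right and vertical edges bottom to top; its universal cover contains a directed plane whose tiling by (preimages of) these squares is not doubly periodic, and in the quarter-plane spanned by the rays colored $y$ and $c$ from a vertex every positive word in $x,y$ of length $n$ appears as the label of a horizontal path of length $n$ starting at one of the first $2^n$ vertices of the vertical $c$-ray, all these words being distinct. Let $W$ be obtained from the first barycentric subdivision of $\mathbf{X}$ (forgetting colors) by attaching to each edge midpoint of color $\alpha$ a path (tip) of length $r(\alpha)$, for a fixed bijection $r:\{a,b,c,x,y\}\to\{1,\dots,5\}$, with edges oriented as in the subdivision (left to right, bottom to top) and tip edges oriented away from their roots (orientation $o^*$). Let $\widetilde{W}$ be the universal cover of $W$ with induced orientation $\tilde o^*$ and partial order $\prec_{\tilde o^*}$, and for a preimage $\tilde v$ of the original vertex of $\mathbf{X}$ let $\widetilde{W}_{\tilde v}$ be the principal filter of $\tilde v$; $(\widetilde{W}_{\tilde v},\prec_{\tilde o^*})$ is the domain of a regular event structure (finite degree and finitely many isomorphism types of futures of configurations). A nice labeling is a labeling of events (equivalently, of the directed edges of the domain, with opposite edges of every square equally labeled)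 such that co-initial events (edges leaving the same vertex) get different labels; it is regular if it uses a finite alphabet and the labeled event structure has finitely many isomorphism types of labeled futures. Every regular trace labeling is a regular nice labeling. *)

theory Defs
  imports Main
begin

section \<open>Wise's one-vertex VH-complex X (data: its squares)\<close>

datatype hcol = Xh | Yh
datatype vcol = Av | Bv | Cv
datatype col = Hc hcol | Vc vcol (* the five edges of X (all loops at the vertex) *)

text \<open>A square of X: (bottom, right, top, left); horizontal edges go left to right,
  vertical edges bottom to top.\<close>
type_synonym sqr = "hcol \<times> vcol \<times> hcol \<times> vcol"

fun sq_bot :: "sqr \<Rightarrow> hcol" where "sq_bot (b, r, t, l) = b"
fun sq_rgt :: "sqr \<Rightarrow> vcol" where "sq_rgt (b, r, t, l) = r"
fun sq_top :: "sqr \<Rightarrow> hcol" where "sq_top (b, r, t, l) = t"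
fun sq_lft :: "sqr \<Rightarrow> vcol" where "sq_lft (b, r, t, l) = l"

text \<open>Corners of a square as edges of the link of the vertex. A link vertex is an end of an
  edge: (e, False) = initial end, (e, True) = terminal end.\<close>
fun corners :: "sqr \<Rightarrow> ((hcol \<times> bool) \<times> (vcol \<times> bool)) set" where
  "corners (b, r, t, l) =
     {((b, False), (l, False)), ((b, True), (r, False)),
      ((t, False), (l, True)), ((t, True), (r, True))}"

text \<open>Complete VH-complex (Wise): the link is the complete bipartite graph between
  horizontal and vertical edge-ends (each pair joined by exactly one corner).\<close>
definition link_complete :: "sqr set \<Rightarrow> bool" where
  "link_complete S \<longleftrightarrow>
     (\<forall>h i v j. \<exists>!s. s \<in> S \<and> ((h, i), (v, j)) \<in> corners s)"

text \<open>A directed plane in the universal cover of X, described by its tiling: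
  hor k j = colour of the horizontal edge at height k from column j to j+1,
  ver k j = colour of the vertical edge at column j from height k to k+1.\<close>
definition directed_plane :: "sqr set \<Rightarrow> (int \<Rightarrow> int \<Rightarrow> hcol) \<Rightarrow> (int \<Rightarrow> int \<Rightarrow> vcol) \<Rightarrow> bool" where
  "directed_plane S hor ver \<longleftrightarrow>
     (\<forall>k j. (hor k j, ver k (j + 1), hor (k + 1) j, ver k j) \<in> S)"

definition doubly_periodic :: "(int \<Rightarrow> int \<Rightarrow> hcol) \<Rightarrow> (int \<Rightarrow> int \<Rightarrow> vcol) \<Rightarrow> bool" where
  "doubly_periodic hor ver \<longleftrightarrow>
     (\<exists>p1 p2 q1 q2. p1 * q2 - p2 * q1 \<noteq> 0 \<and>
        (\<forall>k j. hor (k + p1) (j + p2) = hor k j \<and> ver (k + p1) (j + p2) = ver k j \<and>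
               hor (k + q1) (j + q2) = hor k j \<and> ver (k + q1) (j + q2) = ver k j))"

text \<open>The quarter-plane spanned by the y-ray (bottom row) and the c-ray (left column).\<close>
definition quarter_plane :: "sqr set \<Rightarrow> (nat \<Rightarrow> nat \<Rightarrow> hcol) \<Rightarrow> (nat \<Rightarrow> nat \<Rightarrow> vcol) \<Rightarrow> bool" where
  "quarter_plane S hor ver \<longleftrightarrow>
     (\<forall>j. hor 0 j = Yh) \<and> (\<forall>k. ver k 0 = Cv) \<and>
     (\<forall>k j. (hor k j, ver k (Suc j), hor (Suc k) j, ver k j) \<in> S)"

definition quarter_words :: "sqr set \<Rightarrow> bool" where
  "quarter_words S \<longleftrightarrow>
     (\<exists>hor ver. quarter_plane S hor ver \<and>
        (\<forall>n. inj_on (\<lambda>k. map (hor k) [0..<n]) {..<2 ^ n} \<and>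
             (\<forall>w. length w = n \<longrightarrow> (\<exists>k < 2 ^ n. map (hor k) [0..<n] = w))))"

section \<open>The complex W: barycentric subdivision of X with tips attached\<close>

datatype wv = Ov | Mid col | Cen sqr | Tp col nat
  (* Tp e k (1 \<le> k \<le> r e) is the k-th vertex of the tip attached at Mid e *)

datatype we = Half1 col | Half2 col | Up1 sqr | Up2 sqr | Rt1 sqr | Rt2 sqr | TipE col nat

definition W_edges :: "sqr set \<Rightarrow> (col \<Rightarrow> nat) \<Rightarrow> we set" where
  "W_edges S r =
     range Half1 \<union> range Half2 \<union> Up1 ` S \<union> Up2 ` S \<union> Rt1 ` S \<union> Rt2 ` S \<union>
     {TipE e k | e k. k < r e}"

text \<open>Source and target of edges in the orientation o* (left to right, bottom to top,
  tip edges away from their roots).\<close>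
fun wsrc :: "we \<Rightarrow> wv" where
  "wsrc (Half1 e) = Ov"
| "wsrc (Half2 e) = Mid e"
| "wsrc (Up1 s) = Mid (Hc (sq_bot s))"
| "wsrc (Up2 s) = Cen s"
| "wsrc (Rt1 s) = Mid (Vc (sq_lft s))"
| "wsrc (Rt2 s) = Cen s"
| "wsrc (TipE e k) = (if k = 0 then Mid e else Tp e k)"

fun wtgt :: "we \<Rightarrow> wv" where
  "wtgt (Half1 e) = Mid e"
| "wtgt (Half2 e) = Ov"
| "wtgt (Up1 s) = Cen s"
| "wtgt (Up2 s) = Mid (Hc (sq_top s))"
| "wtgt (Rt1 s) = Cen s"
| "wtgt (Rt2 s) = Mid (Vc (sq_rgt s))"
| "wtgt (TipE e k) = Tp e (Suc k)"

text \<open>The four small squares into which a square s of X is subdivided, each given as a pair of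
  directed 2-paths ([e1,e2],[f1,f2]) from its source corner to its sink corner.\<close>
definition W_squares :: "sqr set \<Rightarrow> ((we \<times> we) \<times> (we \<times> we)) set" where
  "W_squares S = (\<Union>s\<in>S.
     {((Half1 (Hc (sq_bot s)), Up1 s), (Half1 (Vc (sq_lft s)), Rt1 s)),
      ((Half2 (Hc (sq_bot s)), Half1 (Vc (sq_rgt s))), (Up1 s, Rt2 s)),
      ((Half2 (Vc (sq_lft s)), Half1 (Hc (sq_top s))), (Rt1 s, Up2 s)),
      ((Rt2 s, Half2 (Vc (sq_rgt s))), (Up2 s, Half2 (Hc (sq_top s))))})"

section \<open>Edge paths and the universal cover of W\<close>

type_synonym wpath = "(we \<times> bool) list"  (* (edge, traversed forward?) *)

fun dstart :: "we \<times> bool \<Rightarrow> wv" where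
  "dstart (e, d) = (if d then wsrc e else wtgt e)"
fun dend :: "we \<times> bool \<Rightarrow> wv" where
  "dend (e, d) = (if d then wtgt e else wsrc e)"

fun is_path :: "sqr set \<Rightarrow> (col \<Rightarrow> nat) \<Rightarrow> wv \<Rightarrow> wpath \<Rightarrow> bool" where
  "is_path S r u [] = True"
| "is_path S r u (x # p) = (fst x \<in> W_edges S r \<and> dstart x = u \<and> is_path S r (dend x) p)"

fun endpt :: "wv \<Rightarrow> wpath \<Rightarrow> wv" where
  "endpt u [] = u"
| "endpt u (x # p) = endpt (dend x) p"

definition null_loops :: "sqr set \<Rightarrow> wpath set" where
  "null_loops S =
     {[(e, d), (e, \<not> d)] | e d. True} \<union>
     {[(e1, True), (e2, True), (f2, False), (f1, False)] | e1 e2 f1 f2.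
        ((e1, e2), (f1, f2)) \<in> W_squares S \<or> ((f1, f2), (e1, e2)) \<in> W_squares S}"

definition elem_homot :: "sqr set \<Rightarrow> (col \<Rightarrow> nat) \<Rightarrow> wpath \<Rightarrow> wpath \<Rightarrow> bool" where
  "elem_homot S r p q \<longleftrightarrow> is_path S r Ov p \<and> is_path S r Ov q \<and>
     (\<exists>xs ys z. z \<in> null_loops S \<and>
        ((p = xs @ ys \<and> q = xs @ z @ ys) \<or> (q = xs @ ys \<and> p = xs @ z @ ys)))"

definition homot :: "sqr set \<Rightarrow> (col \<Rightarrow> nat) \<Rightarrow> wpath \<Rightarrow> wpath \<Rightarrow> bool" where
  "homot S r = (elem_homot S r)\<^sup>*\<^sup>*"

text \<open>Vertices of the universal cover: homotopy classes of edge paths from the base vertex.\<close>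
definition cls :: "sqr set \<Rightarrow> (col \<Rightarrow> nat) \<Rightarrow> wpath \<Rightarrow> wpath set" where
  "cls S r p = {q. homot S r p q}"

definition UV :: "sqr set \<Rightarrow> (col \<Rightarrow> nat) \<Rightarrow> wpath set set" where
  "UV S r = {cls S r p | p. is_path S r Ov p}"

definition UE :: "sqr set \<Rightarrow> (col \<Rightarrow> nat) \<Rightarrow> wpath set \<Rightarrow> wpath set \<Rightarrow> bool" where
  "UE S r u w \<longleftrightarrow> (\<exists>p e. is_path S r Ov p \<and> e \<in> W_edges S r \<and> wsrc e = endpt Ov p \<and>
      u = cls S r p \<and> w = cls S r (p @ [(e, True)]))"

definition prec :: "sqr set \<Rightarrow> (col \<Rightarrow> nat) \<Rightarrow> wpath set \<Rightarrow> wpath set \<Rightarrow> bool" where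
  "prec S r = (UE S r)\<^sup>*\<^sup>*"

definition filt :: "sqr set \<Rightarrow> (col \<Rightarrow> nat) \<Rightarrow> wpath set \<Rightarrow> wpath set set" where
  "filt S r v = {u. prec S r v u}"

text \<open>Lifted squares of the universal cover: (u, u1, u2, w) with directed edges
  u\<rightarrow>u1\<rightarrow>w and u\<rightarrow>u2\<rightarrow>w; opposite edges are (u,u1),(u2,w) and (u,u2),(u1,w).\<close>
definition USq :: "sqr set \<Rightarrow> (col \<Rightarrow> nat) \<Rightarrow> (wpath set \<times> wpath set \<times> wpath set \<times> wpath set) set" where
  "USq S r = {(cls S r p, cls S r (p @ [(e1, True)]), cls S r (p @ [(f1, True)]),
               cls S r (p @ [(e1, True), (e2, True)])) | p e1 e2 f1 f2.
      is_path S r Ov p \<and> ((e1, e2), (f1, f2)) \<in> W_squares S \<and> endpt Ov p = wsrc e1}"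

definition nice_labeling ::
  "sqr set \<Rightarrow> (col \<Rightarrow> nat) \<Rightarrow> wpath set \<Rightarrow> (wpath set \<times> wpath set \<Rightarrow> 'l) \<Rightarrow> bool" where
  "nice_labeling S r v lab \<longleftrightarrow>
     (\<forall>u u1 u2 w. (u, u1, u2, w) \<in> USq S r \<and> u \<in> filt S r v \<longrightarrow>
        lab (u, u1) = lab (u2, w) \<and> lab (u, u2) = lab (u1, w)) \<and>
     (\<forall>u w1 w2. u \<in> filt S r v \<and> UE S r u w1 \<and> UE S r u w2 \<and> w1 \<noteq> w2 \<longrightarrow>
        lab (u, w1) \<noteq> lab (u, w2))"

text \<open>Isomorphism of (labeled) futures: the principal filters of u and u', as directed graphs
  (Hasse diagrams of the domain order), with labels on directed edges.\<close>
definition future_iso ::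
  "sqr set \<Rightarrow> (col \<Rightarrow> nat) \<Rightarrow> (wpath set \<times> wpath set \<Rightarrow> 'l) \<Rightarrow> wpath set \<Rightarrow> wpath set \<Rightarrow> bool" where
  "future_iso S r lab u u' \<longleftrightarrow>
     (\<exists>f. bij_betw f (filt S r u) (filt S r u') \<and>
        (\<forall>x\<in>filt S r u. \<forall>y\<in>filt S r u. UE S r x y \<longleftrightarrow> UE S r (f x) (f y)) \<and>
        (\<forall>x\<in>filt S r u. \<forall>y\<in>filt S r u. UE S r x y \<longrightarrow> lab (f x, f y) = lab (x, y)))"

definition regular_nice_labeling ::
  "sqr set \<Rightarrow> (col \<Rightarrow> nat) \<Rightarrow> wpath set \<Rightarrow> (wpath set \<times> wpath set \<Rightarrow> 'l) \<Rightarrow> bool" where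
  "regular_nice_labeling S r v lab \<longleftrightarrow>
     nice_labeling S r v lab \<and>
     finite (lab ` {(u, w). u \<in> filt S r v \<and> UE S r u w}) \<and>
     (\<exists>K. finite K \<and> K \<subseteq> filt S r v \<and>
        (\<forall>u\<in>filt S r v. \<exists>u'\<in>K. future_iso S r lab u u'))"

text \<open>Regularity of the (unlabeled) event structure with domain filt v: finite degree and
  finitely many isomorphism types of futures of configurations.\<close>
definition regular_domain :: "sqr set \<Rightarrow> (col \<Rightarrow> nat) \<Rightarrow> wpath set \<Rightarrow> bool" where
  "regular_domain S r v \<longleftrightarrow>
     (\<forall>u\<in>filt S r v. finite {w. UE S r u w}) \<and>
     (\<exists>K. finite K \<and> K \<subseteq> filt S r v \<and>
        (\<forall>u\<in>filt S r v. \<exists>u'\<in>K. future_iso S r (\<lambda>_. ()) u u'))"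

end

theory Submission
  imports Defs
begin


lemma is_path_append[simp]:
  "is_path S r u (p @ q) \<longleftrightarrow> is_path S r u p \<and> is_path S r (endpt u p) q"
  by (induction p arbitrary: u) auto

lemma endpt_append[simp]: "endpt u (p @ q) = endpt (endpt u p) q"
  by (induction p arbitrary: u) auto

lemma W_squares_facts:
  assumes "((e1, e2), (f1, f2)) \<in> W_squares S"
  shows "e1 \<in> W_edges S r \<and> e2 \<in> W_edges S r \<and> f1 \<in> W_edges S r \<and> f2 \<in> W_edges S r \<and>
         wsrc e1 = wsrc f1 \<and> wtgt e1 = wsrc e2 \<and> wtgt f1 = wsrc f2 \<and> wtgt e2 = wtgt f2"
  using assms unfolding W_squares_def W_edges_def
  by (auto elim!: sq_top.elims sq_bot.elims sq_lft.elims sq_rgt.elims)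

lemma null_loop_endpt:
  assumes "z \<in> null_loops S" "is_path S r u z"
  shows "endpt u z = u"
  using assms unfolding null_loops_def
  apply auto
  using W_squares_facts by metis+

definition ht :: "wpath \<Rightarrow> int" where
  "ht p = sum_list (map (\<lambda>x. if snd x then 1 else -1) p)"

lemma ht_append[simp]: "ht (p @ q) = ht p + ht q"
  by (simp add: ht_def)

lemma null_loop_ht: "z \<in> null_loops S \<Longrightarrow> ht z = 0"
  unfolding null_loops_def ht_def by auto

lemma elem_homot_sym: "elem_homot S r p q \<Longrightarrow> elem_homot S r q p"
  unfolding elem_homot_def by blast

lemma elem_homot_inv:
  assumes "elem_homot S r p q"
  shows "is_path S r Ov q \<and> endpt Ov q = endpt Ov p \<and> ht q = ht p"
proof -
  from assms obtain xs ys z where z: "z \<in> null_loops S" and pq: "is_path S r Ov p" "is_path S r Ov q"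
    and c: "(p = xs @ ys \<and> q = xs @ z @ ys) \<or> (q = xs @ ys \<and> p = xs @ z @ ys)"
    unfolding elem_homot_def by blast
  from c show ?thesis
  proof
    assume h: "p = xs @ ys \<and> q = xs @ z @ ys"
    then have "is_path S r (endpt Ov xs) z" using pq by simp
    then have "endpt (endpt Ov xs) z = endpt Ov xs" using null_loop_endpt z by blast
    then show ?thesis using h pq null_loop_ht[OF z] by simp
  next
    assume h: "q = xs @ ys \<and> p = xs @ z @ ys"
    then have "is_path S r (endpt Ov xs) z" using pq by simp
    then have "endpt (endpt Ov xs) z = endpt Ov xs" using null_loop_endpt z by blast
    then show ?thesis using h pq null_loop_ht[OF z] by simp
  qed
qed

lemma homot_inv:
  assumes "homot S r p q" "is_path S r Ov p"
  shows "is_path S r Ov q \<and> endpt Ov q = endpt Ov p \<and> ht q = ht p"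
  using assms(1) unfolding homot_def
  by (induction rule: rtranclp_induct) (use assms(2) elem_homot_inv in auto)

lemma homot_refl: "homot S r p p"
  unfolding homot_def by simp

lemma homot_sym: "homot S r p q \<Longrightarrow> homot S r q p"
  unfolding homot_def
  by (induction rule: rtranclp_induct)
     (auto intro: converse_rtranclp_into_rtranclp elem_homot_sym)

lemma homot_trans: "homot S r p q \<Longrightarrow> homot S r q s \<Longrightarrow> homot S r p s"
  unfolding homot_def by simp

lemma cls_eq_iff: "cls S r p = cls S r q \<longleftrightarrow> homot S r p q"
proof
  assume "cls S r p = cls S r q"
  then have "q \<in> cls S r p" by (simp add: cls_def homot_refl)
  then show "homot S r p q" by (simp add: cls_def)
next
  assume h: "homot S r p q"
  show "cls S r p = cls S r q"
    unfolding cls_def using h homot_sym homot_trans by blast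
qed

lemma elem_homot_app_right:
  assumes "elem_homot S r p q" "is_path S r Ov (p @ s)"
  shows "elem_homot S r (p @ s) (q @ s)"
proof -
  have q: "is_path S r Ov q" "endpt Ov q = endpt Ov p" using elem_homot_inv[OF assms(1)] by auto
  from assms(1) obtain xs ys z where z: "z \<in> null_loops S"
    and c: "(p = xs @ ys \<and> q = xs @ z @ ys) \<or> (q = xs @ ys \<and> p = xs @ z @ ys)"
    unfolding elem_homot_def by blast
  have "is_path S r Ov (q @ s)" using q assms(2) by simp
  then show ?thesis unfolding elem_homot_def using assms(2) z c
    by (intro conjI; (simp only: append_assoc)?) (metis append_assoc)
qed

lemma homot_app_right:
  assumes "homot S r p q" "is_path S r Ov (p @ s)"
  shows "homot S r (p @ s) (q @ s)"
  using assms(1) unfolding homot_def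
proof (induction rule: rtranclp_induct)
  case base then show ?case by simp
next
  case (step y z)
  have "homot S r p y" using step(1) unfolding homot_def .
  then have "is_path S r Ov y" "endpt Ov y = endpt Ov p"
    using homot_inv assms(2) by auto
  then have "is_path S r Ov (y @ s)" using assms(2) by simp
  then show ?case using step elem_homot_app_right
    by (metis rtranclp.rtrancl_into_rtrancl)
qed

lemma elem_homot_app_left:
  assumes "elem_homot S r p q" "is_path S r Ov a" "endpt Ov a = Ov"
  shows "elem_homot S r (a @ p) (a @ q)"
proof -
  have pq: "is_path S r Ov p" "is_path S r Ov q" using assms(1) unfolding elem_homot_def by auto
  from assms(1) obtain xs ys z where z: "z \<in> null_loops S"
    and c: "(p = xs @ ys \<and> q = xs @ z @ ys) \<or> (q = xs @ ys \<and> p = xs @ z @ ys)"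
    unfolding elem_homot_def by blast
  show ?thesis unfolding elem_homot_def using assms pq z c
    by (intro conjI) (simp_all, metis append_assoc)
qed

lemma homot_app_left:
  assumes "homot S r p q" "is_path S r Ov a" "endpt Ov a = Ov"
  shows "homot S r (a @ p) (a @ q)"
  using assms(1) unfolding homot_def
  by (induction rule: rtranclp_induct)
     (auto intro: rtranclp.rtrancl_into_rtrancl elem_homot_app_left[OF _ assms(2,3)])


definition rep :: "sqr set \<Rightarrow> (col \<Rightarrow> nat) \<Rightarrow> wpath set \<Rightarrow> wpath" where
  "rep S r U = (SOME q. is_path S r Ov q \<and> U = cls S r q)"

lemma rep_cls:
  assumes "is_path S r Ov q"
  shows "is_path S r Ov (rep S r (cls S r q)) \<and> homot S r q (rep S r (cls S r q))"
proof -
  have "\<exists>q'. is_path S r Ov q' \<and> cls S r q = cls S r q'" using assms by blast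
  then have "is_path S r Ov (rep S r (cls S r q)) \<and> cls S r q = cls S r (rep S r (cls S r q))"
    unfolding rep_def by (rule someI_ex)
  then show ?thesis using cls_eq_iff by blast
qed

definition ep :: "sqr set \<Rightarrow> (col \<Rightarrow> nat) \<Rightarrow> wpath set \<Rightarrow> wv" where
  "ep S r U = endpt Ov (rep S r U)"
definition hv :: "sqr set \<Rightarrow> (col \<Rightarrow> nat) \<Rightarrow> wpath set \<Rightarrow> int" where
  "hv S r U = ht (rep S r U)"

lemma ep_cls: "is_path S r Ov q \<Longrightarrow> ep S r (cls S r q) = endpt Ov q"
  unfolding ep_def using rep_cls homot_inv by metis
lemma hv_cls: "is_path S r Ov q \<Longrightarrow> hv S r (cls S r q) = ht q"
  unfolding hv_def using rep_cls homot_inv by metis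

lemma cls_homot_path:
  assumes "cls S r p = cls S r q" "is_path S r Ov q"
  shows "is_path S r Ov p \<and> endpt Ov p = endpt Ov q \<and> homot S r q p"
proof -
  have "homot S r q p" using assms(1) cls_eq_iff homot_sym by metis
  then show ?thesis using homot_inv assms(2) by metis
qed

lemma UE_iff:
  assumes q: "is_path S r Ov q"
  shows "UE S r (cls S r q) W \<longleftrightarrow>
     (\<exists>e\<in>W_edges S r. wsrc e = endpt Ov q \<and> W = cls S r (q @ [(e, True)]))"
proof
  assume "UE S r (cls S r q) W"
  then obtain p e where p: "is_path S r Ov p" "e \<in> W_edges S r" "wsrc e = endpt Ov p"
    "cls S r q = cls S r p" "W = cls S r (p @ [(e, True)])" unfolding UE_def by blast
  have h0: "is_path S r Ov p \<and> endpt Ov p = endpt Ov q \<and> homot S r q p"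
    using cls_homot_path[OF p(4)[symmetric] q] .
  have h: "homot S r p q" "endpt Ov p = endpt Ov q" using h0 homot_sym[of S r q p] by auto
  have "is_path S r Ov (p @ [(e, True)])" using p by simp
  then have "homot S r (p @ [(e, True)]) (q @ [(e, True)])" using homot_app_right h by blast
  then show "\<exists>e\<in>W_edges S r. wsrc e = endpt Ov q \<and> W = cls S r (q @ [(e, True)])"
    using p h cls_eq_iff by metis
next
  assume "\<exists>e\<in>W_edges S r. wsrc e = endpt Ov q \<and> W = cls S r (q @ [(e, True)])"
  then show "UE S r (cls S r q) W" unfolding UE_def using q by blast
qed

lemma UE_intro:
  "is_path S r Ov q \<Longrightarrow> e \<in> W_edges S r \<Longrightarrow> wsrc e = endpt Ov q \<Longrightarrow>
    UE S r (cls S r q) (cls S r (q @ [(e, True)]))"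
  using UE_iff by blast

definition isclass :: "sqr set \<Rightarrow> (col \<Rightarrow> nat) \<Rightarrow> wpath set \<Rightarrow> bool" where
  "isclass S r U \<longleftrightarrow> (\<exists>q. is_path S r Ov q \<and> U = cls S r q)"

lemma UE_tgt_class: "UE S r U W \<Longrightarrow> isclass S r W"
proof -
  assume "UE S r U W"
  then obtain p e where p: "is_path S r Ov p" "e \<in> W_edges S r" "wsrc e = endpt Ov p"
    "W = cls S r (p @ [(e, True)])" unfolding UE_def by blast
  have "is_path S r Ov (p @ [(e, True)])" using p by simp
  then show ?thesis using p unfolding isclass_def by blast
qed
lemma UE_src_class: "UE S r U W \<Longrightarrow> isclass S r U"
  unfolding UE_def isclass_def by auto

lemma prec_class: "prec S r U W \<Longrightarrow> isclass S r U \<Longrightarrow> isclass S r W"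
  unfolding prec_def by (induction rule: rtranclp_induct) (auto intro: UE_tgt_class)

lemma UE_hv: "UE S r U W \<Longrightarrow> hv S r W = hv S r U + 1"
  unfolding UE_def by (auto simp: hv_cls ht_def)

lemma prec_hv: "prec S r U W \<Longrightarrow> hv S r U \<le> hv S r W"
  unfolding prec_def by (induction rule: rtranclp_induct) (auto dest: UE_hv)

lemma filt_root:
  assumes "x \<in> filt S r u"
  shows "x = u \<longleftrightarrow> \<not> (\<exists>y\<in>filt S r u. UE S r y x)"
proof
  assume "x = u"
  show "\<not> (\<exists>y\<in>filt S r u. UE S r y x)"
  proof
    assume "\<exists>y\<in>filt S r u. UE S r y x"
    then obtain y where "prec S r u y" "UE S r y u" using \<open>x = u\<close> unfolding filt_def by auto
    then show False using prec_hv UE_hv by fastforce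
  qed
next
  assume "\<not> (\<exists>y\<in>filt S r u. UE S r y x)"
  moreover have "prec S r u x" using assms unfolding filt_def by auto
  ultimately show "x = u" unfolding prec_def filt_def
    by (metis mem_Collect_eq rtranclp.cases)
qed

lemma filt_closed: "x \<in> filt S r u \<Longrightarrow> UE S r x y \<Longrightarrow> y \<in> filt S r u"
  unfolding filt_def prec_def by auto


definition rinv :: "wpath \<Rightarrow> wpath" where
  "rinv p = rev (map (\<lambda>(e, d). (e, \<not> d)) p)"

lemma rinv_Cons[simp]: "rinv (x # p) = rinv p @ [(fst x, \<not> snd x)]"
  unfolding rinv_def by (cases x) auto
lemma rinv_Nil[simp]: "rinv [] = []" unfolding rinv_def by simp

lemma rinv_path: "is_path S r u p \<Longrightarrow>
   is_path S r (endpt u p) (rinv p) \<and> endpt (endpt u p) (rinv p) = u"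
proof (induction p arbitrary: u)
  case Nil then show ?case by simp
next
  case (Cons x p)
  obtain e d where x: "x = (e, d)" by fastforce
  from Cons show ?case by (auto simp: x)
qed

lemma cancel_homot:
  assumes "is_path S r Ov pre" "is_path S r (endpt Ov pre) p" "is_path S r (endpt Ov pre) s"
  shows "homot S r (pre @ p @ rinv p @ s) (pre @ s)"
  using assms
proof (induction p arbitrary: pre s)
  case Nil then show ?case by (simp add: homot_refl)
next
  case (Cons x p)
  obtain e d where x: "x = (e, d)" by fastforce
  let ?pre = "pre @ [x]"
  let ?s = "[(e, \<not> d)] @ s"
  have a1: "is_path S r Ov ?pre" using Cons.prems by simp
  have a2: "is_path S r (endpt Ov ?pre) p" using Cons.prems by simp
  have a3: "is_path S r (endpt Ov ?pre) ?s" using Cons.prems x by auto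
  have h1: "homot S r (?pre @ p @ rinv p @ ?s) (?pre @ ?s)" using Cons.IH[OF a1 a2 a3] .
  have z: "[(e, d), (e, \<not> d)] \<in> null_loops S" unfolding null_loops_def by blast
  have pa: "is_path S r Ov (pre @ s)" using Cons.prems by simp
  have pb: "is_path S r Ov (pre @ [(e, d), (e, \<not> d)] @ s)" using Cons.prems x by auto
  have "elem_homot S r (pre @ [(e, d), (e, \<not> d)] @ s) (pre @ s)"
    unfolding elem_homot_def using pa pb z by blast
  then have h2: "homot S r (?pre @ ?s) (pre @ s)"
    unfolding homot_def using x by simp
  show ?case using homot_trans[OF _ h2] h1 x by simp
qed

definition tr :: "sqr set \<Rightarrow> (col \<Rightarrow> nat) \<Rightarrow> wpath \<Rightarrow> wpath set \<Rightarrow> wpath set" where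
  "tr S r a U = cls S r (a @ rep S r U)"

lemma tr_cls:
  assumes "is_path S r Ov a" "endpt Ov a = Ov" "is_path S r Ov q"
  shows "tr S r a (cls S r q) = cls S r (a @ q)"
  unfolding tr_def cls_eq_iff
  using homot_app_left[OF _ assms(1,2)] rep_cls[OF assms(3)] homot_sym by blast

lemma tr_UE:
  assumes "is_path S r Ov a" "endpt Ov a = Ov" "UE S r x y"
  shows "UE S r (tr S r a x) (tr S r a y)"
proof -
  obtain p e where p: "is_path S r Ov p" "e \<in> W_edges S r" "wsrc e = endpt Ov p"
    "x = cls S r p" "y = cls S r (p @ [(e, True)])" using assms(3) unfolding UE_def by blast
  have "is_path S r Ov (p @ [(e, True)])" using p by simp
  then have "tr S r a y = cls S r ((a @ p) @ [(e, True)])" using tr_cls assms p by simp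
  moreover have "tr S r a x = cls S r (a @ p)" using tr_cls assms p by simp
  ultimately show ?thesis using UE_intro[of S r "a @ p" e] assms p by simp
qed

lemma tr_prec:
  assumes "is_path S r Ov a" "endpt Ov a = Ov" "prec S r x y"
  shows "prec S r (tr S r a x) (tr S r a y)"
  using assms(3) unfolding prec_def
  by (induction rule: rtranclp_induct) (auto intro: rtranclp.rtrancl_into_rtrancl tr_UE[OF assms(1,2)])

lemma tr_tr:
  assumes "is_path S r Ov p" "is_path S r Ov p'" "endpt Ov p = endpt Ov p'" "isclass S r x"
  shows "tr S r (p @ rinv p') (tr S r (p' @ rinv p) x) = x"
proof -
  obtain q where q: "is_path S r Ov q" "x = cls S r q" using assms(4) unfolding isclass_def by blast
  have ra: "is_path S r Ov (p' @ rinv p)" "endpt Ov (p' @ rinv p) = Ov"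
    using rinv_path[OF assms(1)] assms by auto
  have rb: "is_path S r Ov (p @ rinv p')" "endpt Ov (p @ rinv p') = Ov"
    using rinv_path[OF assms(2)] assms by auto
  have "is_path S r Ov (p' @ rinv p @ q)" using ra q by simp
  then have "tr S r (p @ rinv p') (tr S r (p' @ rinv p) x) = cls S r (p @ rinv p' @ p' @ rinv p @ q)"
    using tr_cls ra rb q by simp
  also have "\<dots> = cls S r (p @ rinv p @ q)"
  proof -
    have "homot S r (p @ (rinv p' @ p') @ (rinv p @ q)) (p @ rinv p @ q)"
    proof -
      have "rinv p' @ p' = rinv p' @ rinv (rinv p')" unfolding rinv_def by (simp add: rev_map comp_def case_prod_beta)
      moreover have "homot S r (p @ rinv p' @ rinv (rinv p') @ (rinv p @ q)) (p @ (rinv p @ q))"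
        using cancel_homot[of S r p "rinv p'" "rinv p @ q"] rinv_path[OF assms(2)] rinv_path[OF assms(1)] assms q
        by simp
      ultimately show ?thesis by simp
    qed
    then show ?thesis using cls_eq_iff by simp
  qed
  also have "\<dots> = cls S r q"
    using cancel_homot[of S r "[]" p q] assms q cls_eq_iff by simp
  finally show ?thesis using q by simp
qed

lemma deck_iso:
  assumes "is_path S r Ov p" "is_path S r Ov p'" "endpt Ov p = endpt Ov p'"
  shows "future_iso S r (\<lambda>_. ()) (cls S r p) (cls S r p')"
proof -
  let ?a = "p' @ rinv p" and ?b = "p @ rinv p'"
  have ra: "is_path S r Ov ?a" "endpt Ov ?a = Ov"
    using rinv_path[OF assms(1)] assms by auto
  have rb: "is_path S r Ov ?b" "endpt Ov ?b = Ov"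
    using rinv_path[OF assms(2)] assms by auto
  have ca: "tr S r ?a (cls S r p) = cls S r p'"
    using tr_cls[OF ra assms(1)] cancel_homot[of S r p' "rinv p" "[]"] rinv_path[OF assms(1)] assms
    cls_eq_iff rinv_def by (simp add: rev_map comp_def case_prod_beta)
  have cb: "tr S r ?b (cls S r p') = cls S r p"
    using tr_cls[OF rb assms(2)] cancel_homot[of S r p "rinv p'" "[]"] rinv_path[OF assms(2)] assms
    cls_eq_iff rinv_def by (simp add: rev_map comp_def case_prod_beta)
  have cp: "isclass S r (cls S r p)" "isclass S r (cls S r p')" using assms unfolding isclass_def by auto
  have fa: "tr S r ?a x \<in> filt S r (cls S r p')" if "x \<in> filt S r (cls S r p)" for x
    using tr_prec[OF ra] that ca unfolding filt_def by fastforce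
  have fb: "tr S r ?b x \<in> filt S r (cls S r p)" if "x \<in> filt S r (cls S r p')" for x
    using tr_prec[OF rb] that cb unfolding filt_def by fastforce
  have cla: "isclass S r x" if "x \<in> filt S r (cls S r p)" for x
    using that prec_class cp unfolding filt_def by blast
  have clb: "isclass S r x" if "x \<in> filt S r (cls S r p')" for x
    using that prec_class cp unfolding filt_def by blast
  have inv1: "tr S r ?b (tr S r ?a x) = x" if "x \<in> filt S r (cls S r p)" for x
    using tr_tr assms cla[OF that] by blast
  have inv2: "tr S r ?a (tr S r ?b x) = x" if "x \<in> filt S r (cls S r p')" for x
    using tr_tr[of S r p' p] assms clb[OF that] by simp
  have bij: "bij_betw (tr S r ?a) (filt S r (cls S r p)) (filt S r (cls S r p'))"
    by (rule bij_betw_byWitness[where f'="tr S r ?b"]) (use inv1 inv2 fa fb in auto)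
  have ue: "UE S r x y \<longleftrightarrow> UE S r (tr S r ?a x) (tr S r ?a y)"
    if "x \<in> filt S r (cls S r p)" "y \<in> filt S r (cls S r p)" for x y
    using tr_UE[OF ra, of x y] tr_UE[OF rb, of "tr S r ?a x" "tr S r ?a y"] inv1 that by auto
  show ?thesis unfolding future_iso_def using bij ue by blast
qed


lemma UNIV_col: "(UNIV :: col set) = {Hc Xh, Hc Yh, Vc Av, Vc Bv, Vc Cv}"
proof -
  have "x \<in> {Hc Xh, Hc Yh, Vc Av, Vc Bv, Vc Cv}" for x :: col
  proof (cases x)
    case (Hc h) then show ?thesis by (cases h) auto
  next
    case (Vc v) then show ?thesis by (cases v) auto
  qed
  then show ?thesis by blast
qed

lemma finite_col[simp]: "finite (UNIV :: col set)"
  by (simp add: UNIV_col)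

lemma finite_W_edges:
  assumes "finite S"
  shows "finite (W_edges S r)"
proof -
  have "{TipE e k | e k. k < r e} = (\<Union>e. TipE e ` {..<r e})" by auto
  then have "finite {TipE e k | e k. k < r e}" by simp
  then show ?thesis unfolding W_edges_def using assms by simp
qed

definition V0 :: "sqr set \<Rightarrow> (col \<Rightarrow> nat) \<Rightarrow> wv set" where
  "V0 S r = insert Ov (wsrc ` W_edges S r \<union> wtgt ` W_edges S r)"

lemma endpt_V0: "is_path S r u q \<Longrightarrow> u \<in> V0 S r \<Longrightarrow> endpt u q \<in> V0 S r"
proof (induction q arbitrary: u)
  case Nil then show ?case by simp
next
  case (Cons x q)
  obtain e d where x: "x = (e, d)" by fastforce
  have "dend x \<in> V0 S r" using Cons.prems x unfolding V0_def by auto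
  then show ?case using Cons by simp
qed

lemma filt_class: "U \<in> filt S r (cls S r p) \<Longrightarrow> is_path S r Ov p \<Longrightarrow> isclass S r U"
  unfolding filt_def using prec_class isclass_def by blast

lemma regular_dom:
  assumes "finite S" "is_path S r Ov p0"
  shows "regular_domain S r (cls S r p0)"
proof -
  let ?v = "cls S r p0"
  have fin: "finite {w. UE S r u w}" if uf: "u \<in> filt S r ?v" for u
  proof -
    obtain q where q: "is_path S r Ov q" "u = cls S r q" using filt_class[OF uf assms(2)]
      unfolding isclass_def by blast
    have "{w. UE S r u w} \<subseteq> (\<lambda>e. cls S r (q @ [(e, True)])) ` W_edges S r"
      using UE_iff[OF q(1)] q(2) by auto
    then show ?thesis using finite_W_edges[OF assms(1)] finite_subset by blast
  qed
  define X where "X = {x \<in> V0 S r. \<exists>u\<in>filt S r ?v. ep S r u = x}"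
  define pick where "pick x = (SOME u. u \<in> filt S r ?v \<and> ep S r u = x)" for x
  define K where "K = pick ` X"
  have "finite (V0 S r)" unfolding V0_def using finite_W_edges[OF assms(1)] by simp
  moreover have "X \<subseteq> V0 S r" unfolding X_def by blast
  ultimately have fK: "finite K" unfolding K_def using finite_subset by blast
  have pick: "pick x \<in> filt S r ?v \<and> ep S r (pick x) = x" if "x \<in> X" for x
  proof -
    have "\<exists>u. u \<in> filt S r ?v \<and> ep S r u = x" using that unfolding X_def by blast
    then show ?thesis unfolding pick_def by (rule someI_ex)
  qed
  have sK: "K \<subseteq> filt S r ?v" unfolding K_def using pick by blast
  have iso: "\<exists>u'\<in>K. future_iso S r (\<lambda>_. ()) u u'" if uf: "u \<in> filt S r ?v" for u
  proof -
    obtain q where q: "is_path S r Ov q" "u = cls S r q" using filt_class[OF uf assms(2)]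
      unfolding isclass_def by blast
    have epu: "ep S r u = endpt Ov q" using ep_cls q by blast
    have "endpt Ov q \<in> V0 S r" using endpt_V0[OF q(1)] unfolding V0_def by blast
    then have xX: "endpt Ov q \<in> X" unfolding X_def using uf epu by blast
    obtain q' where q': "is_path S r Ov q'" "pick (endpt Ov q) = cls S r q'"
      using pick[OF xX] filt_class assms(2) unfolding isclass_def by blast
    have "endpt Ov q' = endpt Ov q" using pick[OF xX] q' ep_cls by metis
    then have "future_iso S r (\<lambda>_. ()) u (pick (endpt Ov q))"
      using deck_iso[OF q(1) q'(1)] q q' by simp
    moreover have "pick (endpt Ov q) \<in> K" unfolding K_def using xX by blast
    ultimately show ?thesis by blast
  qed
  show ?thesis unfolding regular_domain_def using fin fK sK iso by blast
qed



lemma elem_homot_ins: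
  assumes "is_path S r Ov (xs @ ys)" "is_path S r Ov (xs @ z @ ys)" "z \<in> null_loops S"
  shows "elem_homot S r (xs @ ys) (xs @ z @ ys)"
  unfolding elem_homot_def using assms by blast

lemma backtrack_null: "[(e, d), (e, \<not> d)] \<in> null_loops S"
  unfolding null_loops_def by blast

lemma backtrack_nullF: "[(e, False), (e, True)] \<in> null_loops S"
  using backtrack_null[of e False S] by simp

lemma square_null:
  assumes "((e1, e2), (f1, f2)) \<in> W_squares S"
  shows "[(e1, True), (e2, True), (f2, False), (f1, False)] \<in> null_loops S"
  unfolding null_loops_def using assms by blast

lemma sq_homot:
  assumes sq: "((e1, e2), (f1, f2)) \<in> W_squares S"
    and xs: "is_path S r Ov xs" "endpt Ov xs = wsrc e1"
  shows "homot S r (xs @ [(e1, True), (e2, True)]) (xs @ [(f1, True), (f2, True)])"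
proof -
  have F: "e1 \<in> W_edges S r" "e2 \<in> W_edges S r" "f1 \<in> W_edges S r" "f2 \<in> W_edges S r"
       "wsrc e1 = wsrc f1" "wtgt e1 = wsrc e2" "wtgt f1 = wsrc f2" "wtgt e2 = wtgt f2"
    using W_squares_facts[OF sq, of r] by auto
  let ?z = "[(e1, True), (e2, True), (f2, False), (f1, False)]"
  let ?a = "xs @ [(e1, True), (e2, True), (f2, False)]"
  let ?b = "xs @ [(e1, True), (e2, True)]"
  have s12: "elem_homot S r (xs @ [(f1, True), (f2, True)]) (xs @ ?z @ [(f1, True), (f2, True)])"
    by (rule elem_homot_ins[OF _ _ square_null[OF sq]]) (use F xs in simp_all)
  have s23: "elem_homot S r (?a @ [(f1, False), (f1, True)] @ [(f2, True)]) (?a @ [(f2, True)])"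
    by (rule elem_homot_sym, rule elem_homot_ins[OF _ _ backtrack_nullF]) (use F xs in simp_all)
  have s34: "elem_homot S r (?b @ [(f2, False), (f2, True)] @ []) (?b @ [])"
    by (rule elem_homot_sym, rule elem_homot_ins[OF _ _ backtrack_nullF]) (use F xs in simp_all)
  have e1: "xs @ ?z @ [(f1, True), (f2, True)] = ?a @ [(f1, False), (f1, True)] @ [(f2, True)]" by simp
  have e2: "?a @ [(f2, True)] = ?b @ [(f2, False), (f2, True)] @ []" by simp
  have "homot S r (xs @ [(f1, True), (f2, True)]) (?b @ [])" unfolding homot_def
    using s12 s23 s34 unfolding e1 e2
    by (meson rtranclp.rtrancl_into_rtrancl rtranclp.rtrancl_refl)
  then show ?thesis using homot_sym by simp
qed



definition sqq :: "(nat \<Rightarrow> nat \<Rightarrow> hcol) \<Rightarrow> (nat \<Rightarrow> nat \<Rightarrow> vcol) \<Rightarrow> nat \<Rightarrow> nat \<Rightarrow> sqr" where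
  "sqq hor ver k j = (hor k j, ver k (Suc j), hor (Suc k) j, ver k j)"

definition gv :: "(nat \<Rightarrow> nat \<Rightarrow> hcol) \<Rightarrow> (nat \<Rightarrow> nat \<Rightarrow> vcol) \<Rightarrow> nat \<Rightarrow> nat \<Rightarrow> wv" where
  "gv hor ver a b =
    (if even a then (if even b then Ov else Mid (Hc (hor (a div 2) (b div 2))))
     else (if even b then Mid (Vc (ver (a div 2) (b div 2))) else Cen (sqq hor ver (a div 2) (b div 2))))"

definition hE :: "(nat \<Rightarrow> nat \<Rightarrow> hcol) \<Rightarrow> (nat \<Rightarrow> nat \<Rightarrow> vcol) \<Rightarrow> nat \<Rightarrow> nat \<Rightarrow> we" where
  "hE hor ver a b =
    (if even a then (if even b then Half1 (Hc (hor (a div 2) (b div 2))) else Half2 (Hc (hor (a div 2) (b div 2))))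
     else (if even b then Rt1 (sqq hor ver (a div 2) (b div 2)) else Rt2 (sqq hor ver (a div 2) (b div 2))))"

definition vE :: "(nat \<Rightarrow> nat \<Rightarrow> hcol) \<Rightarrow> (nat \<Rightarrow> nat \<Rightarrow> vcol) \<Rightarrow> nat \<Rightarrow> nat \<Rightarrow> we" where
  "vE hor ver a b =
    (if even b then (if even a then Half1 (Vc (ver (a div 2) (b div 2))) else Half2 (Vc (ver (a div 2) (b div 2))))
     else (if even a then Up1 (sqq hor ver (a div 2) (b div 2)) else Up2 (sqq hor ver (a div 2) (b div 2))))"

lemma parity_cases:
  fixes a :: nat
  obtains k where "a = 2 * k" | k where "a = Suc (2 * k)"
  by (metis evenE oddE Suc_eq_plus1 add.commute)

lemma hE_facts:
  assumes "\<forall>k j. sqq hor ver k j \<in> S"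
  shows "hE hor ver a b \<in> W_edges S r \<and> wsrc (hE hor ver a b) = gv hor ver a b \<and>
         wtgt (hE hor ver a b) = gv hor ver a (Suc b)"
  using assms
  by (cases a rule: parity_cases; cases b rule: parity_cases)
     (auto simp: hE_def gv_def W_edges_def sqq_def)

lemma vE_facts:
  assumes "\<forall>k j. sqq hor ver k j \<in> S"
  shows "vE hor ver a b \<in> W_edges S r \<and> wsrc (vE hor ver a b) = gv hor ver a b \<and>
         wtgt (vE hor ver a b) = gv hor ver (Suc a) b"
  using assms
  by (cases a rule: parity_cases; cases b rule: parity_cases)
     (auto simp: vE_def gv_def W_edges_def sqq_def)

lemma grid_square:
  assumes "\<forall>k j. sqq hor ver k j \<in> S"
  shows "((hE hor ver a b, vE hor ver a (Suc b)), (vE hor ver a b, hE hor ver (Suc a) b)) \<in> W_squares S \<or>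
         ((vE hor ver a b, hE hor ver (Suc a) b), (hE hor ver a b, vE hor ver a (Suc b))) \<in> W_squares S"
proof (cases a rule: parity_cases)
  case (1 k)
  then show ?thesis
  proof (cases b rule: parity_cases)
    case (1 j)
    have "sqq hor ver k j \<in> S" using assms by blast
    then show ?thesis using \<open>a = 2 * k\<close> 1 unfolding W_squares_def
      by (intro disjI1 UN_I[of "sqq hor ver k j"]) (auto simp: hE_def vE_def sqq_def)
  next
    case (2 j)
    have "sqq hor ver k j \<in> S" using assms by blast
    then show ?thesis using \<open>a = 2 * k\<close> 2 unfolding W_squares_def
      by (intro disjI1 UN_I[of "sqq hor ver k j"]) (auto simp: hE_def vE_def sqq_def)
  qed
next
  case (2 k)
  then show ?thesis
  proof (cases b rule: parity_cases)
    case (1 j)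
    have "sqq hor ver k j \<in> S" using assms by blast
    then show ?thesis using \<open>a = Suc (2 * k)\<close> 1 unfolding W_squares_def
      by (intro disjI2 UN_I[of "sqq hor ver k j"]) (auto simp: hE_def vE_def sqq_def)
  next
    case (2 j)
    have "sqq hor ver k j \<in> S" using assms by blast
    then show ?thesis using \<open>a = Suc (2 * k)\<close> 2 unfolding W_squares_def
      by (intro disjI1 UN_I[of "sqq hor ver k j"]) (auto simp: hE_def vE_def sqq_def)
  qed
qed

lemma path_line:
  assumes "\<forall>c<n. E c \<in> W_edges S r \<and> wsrc (E c) = g c \<and> wtgt (E c) = g (Suc c)"
  shows "is_path S r (g 0) (map (\<lambda>c. (E c, True)) [0..<n]) \<and>
         endpt (g 0) (map (\<lambda>c. (E c, True)) [0..<n]) = g n"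
  using assms by (induction n) auto


definition vp where "vp hor ver a = map (\<lambda>c. (vE hor ver c 0, True)) [0..<a]"
definition hp where "hp hor ver a b = map (\<lambda>c. (hE hor ver a c, True)) [0..<b]"
definition gp where "gp p0 hor ver a b = p0 @ vp hor ver a @ hp hor ver a b"

locale grid =
  fixes S :: "sqr set" and r :: "col \<Rightarrow> nat" and p0 :: wpath
    and hor :: "nat \<Rightarrow> nat \<Rightarrow> hcol" and ver :: "nat \<Rightarrow> nat \<Rightarrow> vcol"
  assumes Q: "\<forall>k j. sqq hor ver k j \<in> S"
    and P: "is_path S r Ov p0" and Pe: "endpt Ov p0 = Ov"
begin

abbreviation "G a b \<equiv> cls S r (gp p0 hor ver a b)"

lemma vp_path: "is_path S r Ov (vp hor ver a) \<and> endpt Ov (vp hor ver a) = gv hor ver a 0"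
proof -
  have "is_path S r (gv hor ver 0 0) (vp hor ver a) \<and> endpt (gv hor ver 0 0) (vp hor ver a) = gv hor ver a 0"
    unfolding vp_def by (rule path_line) (use vE_facts[OF Q] in auto)
  then show ?thesis by (simp add: gv_def)
qed

lemma hp_path: "is_path S r (gv hor ver a 0) (hp hor ver a b) \<and> endpt (gv hor ver a 0) (hp hor ver a b) = gv hor ver a b"
  unfolding hp_def by (rule path_line) (use hE_facts[OF Q] in auto)

lemma gp_path: "is_path S r Ov (gp p0 hor ver a b) \<and> endpt Ov (gp p0 hor ver a b) = gv hor ver a b"
  using vp_path hp_path P Pe by (simp add: gp_def)

lemma gp_Suc: "gp p0 hor ver a (Suc b) = gp p0 hor ver a b @ [(hE hor ver a b, True)]"
  by (simp add: gp_def hp_def)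

lemma gp_0: "gp p0 hor ver a 0 = p0 @ vp hor ver a"
  by (simp add: gp_def hp_def)

lemma gp_00: "gp p0 hor ver 0 0 = p0"
  by (simp add: gp_def hp_def vp_def)

lemma vstep: "homot S r (gp p0 hor ver a b @ [(vE hor ver a b, True)]) (gp p0 hor ver (Suc a) b)"
proof (induction b)
  case 0
  show ?case by (simp add: gp_0 vp_def homot_refl)
next
  case (Suc b)
  let ?p = "gp p0 hor ver a b"
  have pp: "is_path S r Ov ?p" "endpt Ov ?p = gv hor ver a b" using gp_path by auto
  have h1: "homot S r (?p @ [(hE hor ver a b, True), (vE hor ver a (Suc b), True)])
                      (?p @ [(vE hor ver a b, True), (hE hor ver (Suc a) b, True)])"
    using grid_square[OF Q, of a b]
  proof
    assume sq: "((hE hor ver a b, vE hor ver a (Suc b)), vE hor ver a b, hE hor ver (Suc a) b) \<in> W_squares S"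
    show ?thesis by (rule sq_homot[OF sq pp(1)]) (use pp hE_facts[OF Q] in simp)
  next
    assume sq: "((vE hor ver a b, hE hor ver (Suc a) b), hE hor ver a b, vE hor ver a (Suc b)) \<in> W_squares S"
    show ?thesis by (rule homot_sym, rule sq_homot[OF sq pp(1)]) (use pp vE_facts[OF Q] in simp)
  qed
  have pv: "is_path S r Ov ((?p @ [(vE hor ver a b, True)]) @ [(hE hor ver (Suc a) b, True)])"
    using pp vE_facts[OF Q, of a b r] hE_facts[OF Q, of "Suc a" b r] by simp
  have h2: "homot S r (?p @ [(vE hor ver a b, True), (hE hor ver (Suc a) b, True)])
                      (gp p0 hor ver (Suc a) b @ [(hE hor ver (Suc a) b, True)])"
    using homot_app_right[OF Suc.IH pv] by simp
  show ?case using homot_trans[OF h1 h2] by (simp add: gp_Suc)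
qed

lemma G_right: "G a (Suc b) = cls S r (gp p0 hor ver a b @ [(hE hor ver a b, True)])"
  by (simp add: gp_Suc)

lemma G_up: "G (Suc a) b = cls S r (gp p0 hor ver a b @ [(vE hor ver a b, True)])"
  using vstep cls_eq_iff homot_sym by metis

lemma UE_right: "UE S r (G a b) (G a (Suc b))"
  unfolding G_right using UE_intro gp_path hE_facts[OF Q] by metis

lemma UE_up: "UE S r (G a b) (G (Suc a) b)"
  unfolding G_up using UE_intro gp_path vE_facts[OF Q] by metis

lemma prec_right: "prec S r (G a b) (G a (b + d))"
  unfolding prec_def
  by (induction d) (auto intro: rtranclp.rtrancl_into_rtrancl UE_right)

lemma prec_up: "prec S r (G a 0) (G (a + d) 0)"
  unfolding prec_def
  by (induction d) (auto intro: rtranclp.rtrancl_into_rtrancl UE_up)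

lemma G_filt: "G a b \<in> filt S r (cls S r p0)"
proof -
  have "prec S r (G 0 0) (G a 0)" using prec_up[of 0 a] by simp
  moreover have "prec S r (G a 0) (G a b)" using prec_right[of a 0 b] by simp
  ultimately show ?thesis unfolding filt_def prec_def using gp_00 by (metis mem_Collect_eq rtranclp_trans)
qed

lemma G_filt_row: "G a b \<in> filt S r (G a 0)"
  using prec_right[of a 0 b] unfolding filt_def by simp

lemma lab_row:
  assumes nice: "nice_labeling S r (cls S r p0) lab"
  shows "lab (G a b, G a (Suc b)) = lab (G 0 b, G 0 (Suc b))"
proof (induction a)
  case 0 then show ?case by simp
next
  case (Suc a)
  let ?p = "gp p0 hor ver a b"
  have pp: "is_path S r Ov ?p" "endpt Ov ?p = gv hor ver a b" using gp_path by auto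
  have sqc: "\<And>e1 e2 f1 f2. ((e1, e2), (f1, f2)) \<in> W_squares S \<Longrightarrow> wsrc e1 = gv hor ver a b \<Longrightarrow>
      (cls S r ?p, cls S r (?p @ [(e1, True)]), cls S r (?p @ [(f1, True)]),
       cls S r (?p @ [(e1, True), (e2, True)])) \<in> USq S r"
    unfolding USq_def using pp by fastforce
  have nsq: "\<And>u u1 u2 w. (u, u1, u2, w) \<in> USq S r \<Longrightarrow> u \<in> filt S r (cls S r p0) \<Longrightarrow>
        lab (u, u1) = lab (u2, w) \<and> lab (u, u2) = lab (u1, w)"
    using nice unfolding nice_labeling_def by blast
  have corner: "cls S r (?p @ [(hE hor ver a b, True), (vE hor ver a (Suc b), True)]) = G (Suc a) (Suc b)"
    using G_up[of a "Suc b"] by (simp add: gp_Suc)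
  have corner2: "cls S r (?p @ [(vE hor ver a b, True), (hE hor ver (Suc a) b, True)]) = G (Suc a) (Suc b)"
  proof -
    have pv: "is_path S r Ov ((?p @ [(vE hor ver a b, True)]) @ [(hE hor ver (Suc a) b, True)])"
      using pp vE_facts[OF Q, of a b r] hE_facts[OF Q, of "Suc a" b r] by simp
    have "homot S r ((?p @ [(vE hor ver a b, True)]) @ [(hE hor ver (Suc a) b, True)])
                      (gp p0 hor ver (Suc a) b @ [(hE hor ver (Suc a) b, True)])"
      using homot_app_right[OF vstep pv] .
    then show ?thesis using cls_eq_iff by (simp add: gp_Suc)
  qed
  have "lab (G a b, G a (Suc b)) = lab (G (Suc a) b, G (Suc a) (Suc b))"
    using grid_square[OF Q, of a b]
  proof
    assume sq: "((hE hor ver a b, vE hor ver a (Suc b)), vE hor ver a b, hE hor ver (Suc a) b) \<in> W_squares S"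
    have "wsrc (hE hor ver a b) = gv hor ver a b" using hE_facts[OF Q] by blast
    from nsq[OF sqc[OF sq this] G_filt] show ?thesis
      using corner G_right G_up by simp
  next
    assume sq: "((vE hor ver a b, hE hor ver (Suc a) b), hE hor ver a b, vE hor ver a (Suc b)) \<in> W_squares S"
    have "wsrc (vE hor ver a b) = gv hor ver a b" using vE_facts[OF Q] by blast
    from nsq[OF sqc[OF sq this] G_filt] show ?thesis
      using corner2 G_right G_up by simp
  qed
  then show ?case using Suc.IH by simp
qed

end



fun chain :: "sqr set \<Rightarrow> (col \<Rightarrow> nat) \<Rightarrow> nat \<Rightarrow> wpath set \<Rightarrow> bool" where
  "chain S r 0 Z = (\<forall>W. \<not> UE S r Z W)"
| "chain S r (Suc n) Z = (\<exists>W. UE S r Z W \<and> (\<forall>W'. UE S r Z W' \<longrightarrow> W' = W) \<and> chain S r n W)"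

lemma chain_unique: "chain S r n Z \<Longrightarrow> chain S r m Z \<Longrightarrow> n = m"
proof (induction n arbitrary: m Z)
  case 0
  show ?case
  proof (cases m)
    case (Suc m')
    then have "\<exists>W. UE S r Z W \<and> (\<forall>W'. UE S r Z W' \<longrightarrow> W' = W) \<and> chain S r m' W" using 0(2) by simp
    then obtain W where "UE S r Z W" by (elim exE conjE)
    then show ?thesis using 0(1) by simp
  qed simp
next
  case (Suc n)
  have "\<exists>W. UE S r Z W \<and> (\<forall>W'. UE S r Z W' \<longrightarrow> W' = W) \<and> chain S r n W"
    using Suc.prems(1) by simp
  then obtain W where W: "UE S r Z W" "\<forall>W'. UE S r Z W' \<longrightarrow> W' = W" "chain S r n W"
    by (elim exE conjE)
  show ?case
  proof (cases m)
    case 0 then show ?thesis using Suc.prems(2) W(1) by simp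
  next
    case (Suc m')
    then have "\<exists>W. UE S r Z W \<and> (\<forall>W'. UE S r Z W' \<longrightarrow> W' = W) \<and> chain S r m' W"
      using Suc.prems(2) by simp
    then obtain W' where W': "UE S r Z W'" "chain S r m' W'" by (elim exE conjE)
    have "W' = W" using W(2)[rule_format, OF W'(1)] .
    then have "chain S r m' W" using W'(2) by simp
    then show ?thesis using Suc.IH[OF W(3)] \<open>m = Suc m'\<close> by simp
  qed
qed
lemma not_chain_two:
  assumes "UE S r Z W1" "UE S r Z W2" "W1 \<noteq> W2"
  shows "\<not> chain S r n Z"
proof (cases n)
  case 0
  have "\<exists>W. UE S r Z W" using assms(1) by (rule exI)
  then show ?thesis using 0 by simp
next
  case (Suc m)
  show ?thesis
  proof
    assume "chain S r n Z"
    then have "\<exists>W. UE S r Z W \<and> (\<forall>W'. UE S r Z W' \<longrightarrow> W' = W) \<and> chain S r m W"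
      using Suc by simp
    then obtain W where W: "\<forall>W'. UE S r Z W' \<longrightarrow> W' = W" by (elim exE conjE)
    have "W1 = W" using W[rule_format, OF assms(1)] .
    moreover have "W2 = W" using W[rule_format, OF assms(2)] .
    ultimately show False using assms(3) by simp
  qed
qed

lemma out_Tp:
  assumes "e' \<in> W_edges S r" "wsrc e' = Tp e k" "1 \<le> k"
  shows "e' = TipE e k \<and> k < r e"
proof (cases e')
  case (TipE e2 k2)
  then show ?thesis using assms by (auto simp: W_edges_def split: if_splits)
qed (use assms in auto)

lemma cls_neq:
  assumes "is_path S r Ov p" "is_path S r Ov q" "endpt Ov p \<noteq> endpt Ov q"
  shows "cls S r p \<noteq> cls S r q"
proof
  assume "cls S r p = cls S r q"
  then have "ep S r (cls S r p) = ep S r (cls S r q)" by simp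
  then show False using ep_cls[OF assms(1)] ep_cls[OF assms(2)] assms(3) by simp
qed

lemma TipE_in: "k < r e \<Longrightarrow> TipE e k \<in> W_edges S r"
  unfolding W_edges_def by (rule UnI2) simp

lemma UE_obtain:
  assumes "is_path S r Ov q" "UE S r (cls S r q) W"
  obtains e where "e \<in> W_edges S r" "wsrc e = endpt Ov q" "W = cls S r (q @ [(e, True)])"
  using UE_iff[OF assms(1), THEN iffD1, OF assms(2)] by (elim bexE conjE) (rule that)

lemma chain_tip_aux:
  "\<forall>k q. r e - k = d \<longrightarrow> is_path S r Ov q \<longrightarrow> endpt Ov q = Tp e k \<longrightarrow> 1 \<le> k \<longrightarrow> k \<le> r e
     \<longrightarrow> chain S r d (cls S r q)"
proof (induction d)
  case 0
  show ?case
  proof (intro allI impI)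
    fix k q assume a: "r e - k = 0" "is_path S r Ov q" "endpt Ov q = Tp e k" "1 \<le> k" "k \<le> r e"
    then have k: "k = r e" by simp
    show "chain S r 0 (cls S r q)"
    proof (simp, intro allI notI)
      fix W assume w: "UE S r (cls S r q) W"
      obtain e' where e': "e' \<in> W_edges S r" "wsrc e' = endpt Ov q" "W = cls S r (q @ [(e', True)])"
        by (rule UE_obtain[OF a(2) w])
      have "k < r e" using out_Tp[OF e'(1) _ a(4)] e'(2) a(3) by simp
      then show False using k by simp
    qed
  qed
next
  case (Suc d)
  show ?case
  proof (intro allI impI)
    fix k q assume a: "r e - k = Suc d" "is_path S r Ov q" "endpt Ov q = Tp e k" "1 \<le> k" "k \<le> r e"
    have kr: "k < r e" using a by linarith
    have ed: "TipE e k \<in> W_edges S r" using TipE_in kr by simp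
    have ws: "wsrc (TipE e k) = endpt Ov q" using a by simp
    let ?q = "q @ [(TipE e k, True)]"
    have pq: "is_path S r Ov ?q" "endpt Ov ?q = Tp e (Suc k)" using a ed ws by simp_all
    have rd: "r e - Suc k = d" using a(1) by arith
    have ch: "chain S r d (cls S r ?q)"
      using Suc.IH[rule_format, of "Suc k" ?q] rd pq kr by simp
    have uni: "W' = cls S r ?q" if w: "UE S r (cls S r q) W'" for W'
    proof -
      obtain e' where e': "e' \<in> W_edges S r" "wsrc e' = endpt Ov q" "W' = cls S r (q @ [(e', True)])"
        by (rule UE_obtain[OF a(2) w])
      have "e' = TipE e k" using out_Tp[OF e'(1) _ a(4)] e'(2) a(3) by simp
      then show ?thesis using e'(3) by simp
    qed
    have ue: "UE S r (cls S r q) (cls S r ?q)" using UE_intro[OF a(2) ed ws] .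
    have al: "\<forall>W'. UE S r (cls S r q) W' \<longrightarrow> W' = cls S r ?q" by (intro allI impI) (rule uni)
    have "\<exists>W. UE S r (cls S r q) W \<and> (\<forall>W'. UE S r (cls S r q) W' \<longrightarrow> W' = W) \<and> chain S r d W"
      by (rule exI[of _ "cls S r ?q"], intro conjI, rule ue, rule al, rule ch)
    then show "chain S r (Suc d) (cls S r q)" by (simp only: chain.simps)
  qed
qed

lemma chain_tip:
  assumes "is_path S r Ov q" "endpt Ov q = Tp e k" "1 \<le> k" "k \<le> r e"
  shows "chain S r (r e - k) (cls S r q)"
  by (rule chain_tip_aux[rule_format, OF refl assms])


lemma bij_pre:
  assumes "bij_betw f A B" "y \<in> B"
  obtains x where "x \<in> A" "y = f x"
  using assms unfolding bij_betw_def by blast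

lemma bij_mem: "bij_betw f A B \<Longrightarrow> x \<in> A \<Longrightarrow> f x \<in> B"
  using bij_betwE by blast

lemma future_iso_sym:
  assumes "future_iso S r lab u u'"
  shows "future_iso S r lab u' u"
proof -
  obtain f where f: "bij_betw f (filt S r u) (filt S r u')"
    "\<forall>x\<in>filt S r u. \<forall>y\<in>filt S r u. UE S r x y \<longleftrightarrow> UE S r (f x) (f y)"
    "\<forall>x\<in>filt S r u. \<forall>y\<in>filt S r u. UE S r x y \<longrightarrow> lab (f x, f y) = lab (x, y)"
    using assms unfolding future_iso_def by blast
  let ?g = "inv_into (filt S r u) f"
  have g: "bij_betw ?g (filt S r u') (filt S r u)" using bij_betw_inv_into f(1) by blast
  have gi: "f (?g x) = x" if "x \<in> filt S r u'" for x
    using f(1) that by (simp add: bij_betw_inv_into_right)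
  have gm: "?g x \<in> filt S r u" if "x \<in> filt S r u'" for x
    using bij_mem[OF g that] .
  have ue: "UE S r x y \<longleftrightarrow> UE S r (?g x) (?g y)" if xy: "x \<in> filt S r u'" "y \<in> filt S r u'" for x y
  proof -
    have "UE S r (?g x) (?g y) \<longleftrightarrow> UE S r (f (?g x)) (f (?g y))"
      using f(2)[rule_format, OF gm[OF xy(1)] gm[OF xy(2)]] .
    then show ?thesis using gi[OF xy(1)] gi[OF xy(2)] by simp
  qed
  have lb: "lab (?g x, ?g y) = lab (x, y)" if xy: "x \<in> filt S r u'" "y \<in> filt S r u'" "UE S r x y" for x y
  proof -
    have "UE S r (?g x) (?g y)" using ue[OF xy(1,2)] xy(3) by simp
    then have "lab (f (?g x), f (?g y)) = lab (?g x, ?g y)"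
      using f(3)[rule_format, OF gm[OF xy(1)] gm[OF xy(2)]] by simp
    then show ?thesis using gi[OF xy(1)] gi[OF xy(2)] by simp
  qed
  have "\<forall>x\<in>filt S r u'. \<forall>y\<in>filt S r u'. UE S r x y \<longleftrightarrow> UE S r (?g x) (?g y)"
    using ue by (intro ballI)
  moreover have "\<forall>x\<in>filt S r u'. \<forall>y\<in>filt S r u'. UE S r x y \<longrightarrow> lab (?g x, ?g y) = lab (x, y)"
    using lb by (intro ballI impI)
  ultimately show ?thesis unfolding future_iso_def using g by blast
qed

lemma future_iso_trans:
  assumes "future_iso S r lab u u'" "future_iso S r lab u' u''"
  shows "future_iso S r lab u u''"
proof -
  obtain f where f: "bij_betw f (filt S r u) (filt S r u')"
    "\<forall>x\<in>filt S r u. \<forall>y\<in>filt S r u. UE S r x y \<longleftrightarrow> UE S r (f x) (f y)"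
    "\<forall>x\<in>filt S r u. \<forall>y\<in>filt S r u. UE S r x y \<longrightarrow> lab (f x, f y) = lab (x, y)"
    using assms(1) unfolding future_iso_def by blast
  obtain g where g: "bij_betw g (filt S r u') (filt S r u'')"
    "\<forall>x\<in>filt S r u'. \<forall>y\<in>filt S r u'. UE S r x y \<longleftrightarrow> UE S r (g x) (g y)"
    "\<forall>x\<in>filt S r u'. \<forall>y\<in>filt S r u'. UE S r x y \<longrightarrow> lab (g x, g y) = lab (x, y)"
    using assms(2) unfolding future_iso_def by blast
  have fm: "f x \<in> filt S r u'" if "x \<in> filt S r u" for x using bij_mem[OF f(1) that] .
  have b: "bij_betw (g \<circ> f) (filt S r u) (filt S r u'')" using bij_betw_trans f(1) g(1) by blast
  have ue: "UE S r x y \<longleftrightarrow> UE S r ((g \<circ> f) x) ((g \<circ> f) y)" if xy: "x \<in> filt S r u" "y \<in> filt S r u" for x y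
  proof -
    have 1: "UE S r x y \<longleftrightarrow> UE S r (f x) (f y)" using f(2)[rule_format, OF xy] .
    have 2: "UE S r (f x) (f y) \<longleftrightarrow> UE S r (g (f x)) (g (f y))" using g(2)[rule_format, OF fm[OF xy(1)] fm[OF xy(2)]] .
    show ?thesis using 1 2 by simp
  qed
  have lb: "lab ((g \<circ> f) x, (g \<circ> f) y) = lab (x, y)" if xy: "x \<in> filt S r u" "y \<in> filt S r u" "UE S r x y" for x y
  proof -
    have 1: "UE S r (f x) (f y)" using f(2)[rule_format, OF xy(1,2)] xy(3) by simp
    have 2: "lab (g (f x), g (f y)) = lab (f x, f y)" using g(3)[rule_format, OF fm[OF xy(1)] fm[OF xy(2)] 1] .
    have 3: "lab (f x, f y) = lab (x, y)" using f(3)[rule_format, OF xy] .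
    show ?thesis using 2 3 by simp
  qed
  have "\<forall>x\<in>filt S r u. \<forall>y\<in>filt S r u. UE S r x y \<longleftrightarrow> UE S r ((g \<circ> f) x) ((g \<circ> f) y)"
    using ue by (intro ballI)
  moreover have "\<forall>x\<in>filt S r u. \<forall>y\<in>filt S r u. UE S r x y \<longrightarrow> lab ((g \<circ> f) x, (g \<circ> f) y) = lab (x, y)"
    using lb by (intro ballI impI)
  ultimately show ?thesis unfolding future_iso_def using b by blast
qed

lemma filt_self: "u \<in> filt S r u"
  unfolding filt_def prec_def by simp

lemma iso_root:
  assumes "bij_betw f (filt S r u) (filt S r u')"
    "\<forall>x\<in>filt S r u. \<forall>y\<in>filt S r u. UE S r x y \<longleftrightarrow> UE S r (f x) (f y)"
  shows "f u = u'"
proof -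
  have fu: "f u \<in> filt S r u'" using bij_mem[OF assms(1) filt_self] .
  have "\<not> (\<exists>y\<in>filt S r u'. UE S r y (f u))"
  proof
    assume "\<exists>y\<in>filt S r u'. UE S r y (f u)"
    then obtain y where y: "y \<in> filt S r u'" "UE S r y (f u)" by blast
    obtain y' where y': "y' \<in> filt S r u" "y = f y'" by (rule bij_pre[OF assms(1) y(1)])
    have "UE S r y' u" using assms(2)[rule_format, OF y'(1) filt_self] y(2) y'(2) by simp
    then have "\<exists>y\<in>filt S r u. UE S r y u" using y'(1) by blast
    have uu: "u \<in> filt S r u" by (rule filt_self)
    show False using filt_root[OF uu] \<open>\<exists>y\<in>filt S r u. UE S r y u\<close> by simp
  qed
  then show ?thesis using filt_root[OF fu] by simp
qed


definition tipl :: "sqr set \<Rightarrow> (col \<Rightarrow> nat) \<Rightarrow> nat \<Rightarrow> wpath set \<Rightarrow> bool" where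
  "tipl S r n Y \<longleftrightarrow> (\<exists>Z. UE S r Y Z \<and> chain S r n Z)"

lemma not_chain_Ov:
  assumes "is_path S r Ov q" "endpt Ov q = Ov"
  shows "\<not> chain S r n (cls S r q)"
proof -
  let ?q1 = "q @ [(Half1 (Hc Xh), True)]" and ?q2 = "q @ [(Half1 (Hc Yh), True)]"
  have e: "Half1 (Hc Xh) \<in> W_edges S r" "Half1 (Hc Yh) \<in> W_edges S r" unfolding W_edges_def by simp_all
  have 1: "UE S r (cls S r q) (cls S r ?q1)" by (rule UE_intro[OF assms(1) e(1)]) (simp add: assms(2))
  have 2: "UE S r (cls S r q) (cls S r ?q2)" by (rule UE_intro[OF assms(1) e(2)]) (simp add: assms(2))
  have 3: "cls S r ?q1 \<noteq> cls S r ?q2"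
    by (rule cls_neq) (simp_all add: assms e)
  show ?thesis by (rule not_chain_two[OF 1 2 3])
qed

lemma not_chain_Cen:
  assumes "is_path S r Ov q" "endpt Ov q = Cen s" "s \<in> S"
  shows "\<not> chain S r n (cls S r q)"
proof -
  let ?q1 = "q @ [(Up2 s, True)]" and ?q2 = "q @ [(Rt2 s, True)]"
  have e: "Up2 s \<in> W_edges S r" "Rt2 s \<in> W_edges S r" unfolding W_edges_def using assms(3) by simp_all
  have 1: "UE S r (cls S r q) (cls S r ?q1)" by (rule UE_intro[OF assms(1) e(1)]) (simp add: assms(2))
  have 2: "UE S r (cls S r q) (cls S r ?q2)" by (rule UE_intro[OF assms(1) e(2)]) (simp add: assms(2))
  have 3: "cls S r ?q1 \<noteq> cls S r ?q2"
    by (rule cls_neq) (simp_all add: assms e)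
  show ?thesis by (rule not_chain_two[OF 1 2 3])
qed

lemma out_Mid:
  assumes "e' \<in> W_edges S r" "wsrc e' = Mid e"
  shows "e' = Half2 e \<or> (\<exists>s\<in>S. e' = Up1 s \<or> e' = Rt1 s) \<or> (e' = TipE e 0 \<and> 0 < r e)"
proof (cases e')
  case (Up1 s)
  then have "s \<in> S" using assms(1) by (auto simp: W_edges_def)
  then show ?thesis using Up1 by blast
next
  case (Rt1 s)
  then have "s \<in> S" using assms(1) by (auto simp: W_edges_def)
  then show ?thesis using Rt1 by blast
next
  case (TipE e2 k2)
  then show ?thesis using assms by (auto simp: W_edges_def split: if_splits)
qed (use assms in auto)

lemma tipl_Mid:
  assumes q: "is_path S r Ov q" "endpt Ov q = Mid e" and t: "tipl S r n (cls S r q)"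
  shows "n = r e - 1"
proof -
  obtain Z where Z: "UE S r (cls S r q) Z" "chain S r n Z" using t unfolding tipl_def by blast
  obtain e' where e': "e' \<in> W_edges S r" "wsrc e' = endpt Ov q" "Z = cls S r (q @ [(e', True)])"
    by (rule UE_obtain[OF q(1) Z(1)])
  have pz: "is_path S r Ov (q @ [(e', True)])" using q e' by simp
  have wm: "wsrc e' = Mid e" using e'(2) q(2) by simp
  show ?thesis using out_Mid[OF e'(1) wm]
  proof (elim disjE)
    assume h: "e' = Half2 e"
    have "endpt Ov (q @ [(e', True)]) = Ov" using h by simp
    then have "\<not> chain S r n Z" using not_chain_Ov[OF pz] e'(3) by simp
    then show ?thesis using Z(2) by simp
  next
    assume "\<exists>s\<in>S. e' = Up1 s \<or> e' = Rt1 s"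
    then obtain s where s: "s \<in> S" "e' = Up1 s \<or> e' = Rt1 s" by blast
    have "endpt Ov (q @ [(e', True)]) = Cen s" using s(2) by auto
    then have "\<not> chain S r n Z" using not_chain_Cen[OF pz _ s(1)] e'(3) by simp
    then show ?thesis using Z(2) by simp
  next
    assume h: "e' = TipE e 0 \<and> 0 < r e"
    have en: "endpt Ov (q @ [(e', True)]) = Tp e 1" using h by simp
    have "chain S r (r e - 1) (cls S r (q @ [(e', True)]))"
      by (rule chain_tip[OF pz en]) (use h in simp_all)
    then have "chain S r (r e - 1) Z" using e'(3) by simp
    then show ?thesis using chain_unique Z(2) by blast
  qed
qed

lemma tipl_Mid_ex:
  assumes q: "is_path S r Ov q" "endpt Ov q = Mid e" and re: "1 \<le> r e"
  shows "tipl S r (r e - 1) (cls S r q)"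
proof -
  have ed: "TipE e 0 \<in> W_edges S r" using TipE_in re by simp
  let ?q = "q @ [(TipE e 0, True)]"
  have pz: "is_path S r Ov ?q" "endpt Ov ?q = Tp e 1" using q ed by simp_all
  have 1: "UE S r (cls S r q) (cls S r ?q)" by (rule UE_intro[OF q(1) ed]) (simp add: q(2))
  have 2: "chain S r (r e - 1) (cls S r ?q)" by (rule chain_tip[OF pz]) (use re in simp_all)
  show ?thesis unfolding tipl_def by (rule exI[of _ "cls S r ?q"], intro conjI, rule 1, rule 2)
qed

lemma chain_pres:
  assumes f: "bij_betw f (filt S r u) (filt S r u')"
    "\<forall>x\<in>filt S r u. \<forall>y\<in>filt S r u. UE S r x y \<longleftrightarrow> UE S r (f x) (f y)"
  shows "x \<in> filt S r u \<Longrightarrow> chain S r n x \<Longrightarrow> chain S r n (f x)"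
proof (induction n arbitrary: x)
  case 0
  show ?case
  proof (simp only: chain.simps, intro allI notI)
    fix W assume W: "UE S r (f x) W"
    have fx: "f x \<in> filt S r u'" using bij_mem[OF f(1) 0(1)] .
    have "W \<in> filt S r u'" using filt_closed[OF fx W] .
    then obtain W' where W': "W' \<in> filt S r u" "W = f W'" by (rule bij_pre[OF f(1)])
    have "UE S r x W'" using f(2)[rule_format, OF 0(1) W'(1)] W W'(2) by simp
    then show False using 0(2) by simp
  qed
next
  case (Suc n)
  have "\<exists>W. UE S r x W \<and> (\<forall>W'. UE S r x W' \<longrightarrow> W' = W) \<and> chain S r n W" using Suc.prems(2) by simp
  then obtain W where W: "UE S r x W" "\<forall>W'. UE S r x W' \<longrightarrow> W' = W" "chain S r n W"
    by (elim exE conjE)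
  have Wf: "W \<in> filt S r u" using filt_closed[OF Suc.prems(1) W(1)] .
  have 1: "UE S r (f x) (f W)" using f(2)[rule_format, OF Suc.prems(1) Wf] W(1) by simp
  have 2: "\<forall>W'. UE S r (f x) W' \<longrightarrow> W' = f W"
  proof (intro allI impI)
    fix W' assume W': "UE S r (f x) W'"
    have fx: "f x \<in> filt S r u'" using bij_mem[OF f(1) Suc.prems(1)] .
    have "W' \<in> filt S r u'" using filt_closed[OF fx W'] .
    then obtain W'' where W'': "W'' \<in> filt S r u" "W' = f W''" by (rule bij_pre[OF f(1)])
    have "UE S r x W''" using f(2)[rule_format, OF Suc.prems(1) W''(1)] W' W''(2) by simp
    then have "W'' = W" using W(2)[rule_format] by blast
    then show "W' = f W" using W''(2) by simp
  qed
  have 3: "chain S r n (f W)" using Suc.IH[OF Wf W(3)] .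
  have "\<exists>V. UE S r (f x) V \<and> (\<forall>W'. UE S r (f x) W' \<longrightarrow> W' = V) \<and> chain S r n V"
    by (rule exI[of _ "f W"], intro conjI, rule 1, rule 2, rule 3)
  then show ?case by (simp only: chain.simps)
qed

lemma tipl_pres:
  assumes f: "bij_betw f (filt S r u) (filt S r u')"
    "\<forall>x\<in>filt S r u. \<forall>y\<in>filt S r u. UE S r x y \<longleftrightarrow> UE S r (f x) (f y)"
    and x: "x \<in> filt S r u" "tipl S r n x"
  shows "tipl S r n (f x)"
proof -
  obtain Z where Z: "UE S r x Z" "chain S r n Z" using x(2) unfolding tipl_def by blast
  have Zf: "Z \<in> filt S r u" using filt_closed[OF x(1) Z(1)] .
  have 1: "UE S r (f x) (f Z)" using f(2)[rule_format, OF x(1) Zf] Z(1) by simp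
  have 2: "chain S r n (f Z)" using chain_pres[OF f Zf Z(2)] .
  show ?thesis unfolding tipl_def by (rule exI[of _ "f Z"], intro conjI, rule 1, rule 2)
qed


theorem theorem6p5:
  fixes S :: "sqr set" and r :: "col \<Rightarrow> nat" and p0 :: wpath
  assumes X_squares: "card S = 6"
    and X_complete: "link_complete S"
    and X_plane: "\<exists>hor ver. directed_plane S hor ver \<and> \<not> doubly_periodic hor ver"
    and X_words: "quarter_words S"
    and r_bij: "bij_betw r UNIV {1..5}"
    and p0_path: "is_path S r Ov p0"
    and p0_end: "endpt Ov p0 = Ov"
  shows "regular_domain S r (cls S r p0) \<and>
         \<not> (\<exists>lab :: wpath set \<times> wpath set \<Rightarrow> 'l. regular_nice_labeling S r (cls S r p0) lab)"
proof
  have finS: "finite S" by (rule card_ge_0_finite) (simp add: X_squares)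
  show "regular_domain S r (cls S r p0)" by (rule regular_dom[OF finS p0_path])
next
  show "\<not> (\<exists>lab :: wpath set \<times> wpath set \<Rightarrow> 'l. regular_nice_labeling S r (cls S r p0) lab)"
  proof
    assume "\<exists>lab :: wpath set \<times> wpath set \<Rightarrow> 'l. regular_nice_labeling S r (cls S r p0) lab"
    then obtain lab :: "wpath set \<times> wpath set \<Rightarrow> 'l" where
      reg: "regular_nice_labeling S r (cls S r p0) lab" by blast
    have nice: "nice_labeling S r (cls S r p0) lab" using reg unfolding regular_nice_labeling_def by blast
    obtain K where K: "finite K" "K \<subseteq> filt S r (cls S r p0)"
      "\<forall>u\<in>filt S r (cls S r p0). \<exists>u'\<in>K. future_iso S r lab u u'"
      using reg unfolding regular_nice_labeling_def by blast
    obtain hor ver where qp: "quarter_plane S hor ver"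
      and words: "\<forall>n. inj_on (\<lambda>k. map (hor k) [0..<n]) {..<2 ^ n}"
      using X_words unfolding quarter_words_def by blast
    have Q: "\<forall>k j. sqq hor ver k j \<in> S" using qp unfolding quarter_plane_def sqq_def by blast
    interpret g: grid S r p0 hor ver
      by unfold_locales (rule Q, rule p0_path, rule p0_end)
    have rinj: "inj r" using r_bij bij_betw_imp_inj_on by blast
    have rge: "1 \<le> r x" for x
    proof -
      have "r x \<in> {1..5}" using bij_betwE[OF r_bij] by blast
      then show ?thesis by simp
    qed
    define N where "N = card K"
    define c where "c k = cls S r (gp p0 hor ver (2 * k) 0)" for k
    define h where "h k = (SOME u'. u' \<in> K \<and> future_iso S r lab (c k) u')" for k
    have h: "h k \<in> K \<and> future_iso S r lab (c k) (h k)" for k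
    proof -
      have "c k \<in> filt S r (cls S r p0)" unfolding c_def by (rule g.G_filt)
      then have "\<exists>u'. u' \<in> K \<and> future_iso S r lab (c k) u'" using K(3) by blast
      then show ?thesis unfolding h_def by (rule someI_ex)
    qed
    have "\<not> inj_on h {..<2 ^ N}"
    proof
      assume "inj_on h {..<2 ^ N}"
      moreover have "h ` {..<2 ^ N} \<subseteq> K" using h by blast
      ultimately have "card {..<(2::nat) ^ N} \<le> card K" using card_inj_on_le K(1) by blast
      then have "(2::nat) ^ N \<le> N" unfolding N_def by simp
      moreover have "N < (2::nat) ^ N" by (rule less_exp)
      ultimately show False by simp
    qed
    then obtain i j where ij: "i < 2 ^ N" "j < 2 ^ N" "i \<noteq> j" "h i = h j"
      unfolding inj_on_def by auto
    have fi: "future_iso S r lab (c i) (h j)" using conjunct2[OF h[of i]] ij(4) by simp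
    have "future_iso S r lab (c i) (c j)"
      by (rule future_iso_trans[OF fi future_iso_sym[OF conjunct2[OF h[of j]]]])
    then obtain f where f: "bij_betw f (filt S r (c i)) (filt S r (c j))"
      "\<forall>x\<in>filt S r (c i). \<forall>y\<in>filt S r (c i). UE S r x y \<longleftrightarrow> UE S r (f x) (f y)"
      "\<forall>x\<in>filt S r (c i). \<forall>y\<in>filt S r (c i). UE S r x y \<longrightarrow> lab (f x, f y) = lab (x, y)"
      unfolding future_iso_def by blast
    have distinct: "lab (u, w1) \<noteq> lab (u, w2)"
      if "u \<in> filt S r (cls S r p0)" "UE S r u w1" "UE S r u w2" "w1 \<noteq> w2" for u w1 w2
      using nice that unfolding nice_labeling_def by blast
    have row: "f (cls S r (gp p0 hor ver (2 * i) b)) = cls S r (gp p0 hor ver (2 * j) b)" for b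
    proof (induction b)
      case 0
      show ?case using iso_root[OF f(1) f(2)] unfolding c_def .
    next
      case (Suc b)
      let ?x = "cls S r (gp p0 hor ver (2 * i) b)" and ?y = "cls S r (gp p0 hor ver (2 * i) (Suc b))"
      let ?x' = "cls S r (gp p0 hor ver (2 * j) b)" and ?y' = "cls S r (gp p0 hor ver (2 * j) (Suc b))"
      have xf: "?x \<in> filt S r (c i)" unfolding c_def by (rule g.G_filt_row)
      have yf: "?y \<in> filt S r (c i)" unfolding c_def by (rule g.G_filt_row)
      have uxy: "UE S r ?x ?y" by (rule g.UE_right)
      have 1: "UE S r ?x' (f ?y)" using f(2)[rule_format, OF xf yf] uxy Suc.IH by simp
      have 2: "UE S r ?x' ?y'" by (rule g.UE_right)
      have "lab (f ?x, f ?y) = lab (?x, ?y)" using f(3)[rule_format, OF xf yf uxy] .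
      also have "\<dots> = lab (?x', ?y')"
        using g.lab_row[OF nice, of "2 * i" b] g.lab_row[OF nice, of "2 * j" b] by simp
      finally have 3: "lab (?x', f ?y) = lab (?x', ?y')" using Suc.IH by simp
      have x'f: "?x' \<in> filt S r (cls S r p0)" by (rule g.G_filt)
      show ?case
      proof (rule ccontr)
        assume "f ?y \<noteq> ?y'"
        then show False using distinct[OF x'f 1 2] 3 by simp
      qed
    qed
    have col: "hor i m = hor j m" for m
    proof -
      let ?b = "Suc (2 * m)"
      have gvi: "gv hor ver (2 * i) ?b = Mid (Hc (hor i m))" by (simp add: gv_def)
      have gvj: "gv hor ver (2 * j) ?b = Mid (Hc (hor j m))" by (simp add: gv_def)
      have pi: "is_path S r Ov (gp p0 hor ver (2 * i) ?b)" "endpt Ov (gp p0 hor ver (2 * i) ?b) = Mid (Hc (hor i m))"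
        using g.gp_path gvi by simp_all
      have pj: "is_path S r Ov (gp p0 hor ver (2 * j) ?b)" "endpt Ov (gp p0 hor ver (2 * j) ?b) = Mid (Hc (hor j m))"
        using g.gp_path gvj by simp_all
      have t: "tipl S r (r (Hc (hor i m)) - 1) (cls S r (gp p0 hor ver (2 * i) ?b))"
        by (rule tipl_Mid_ex[OF pi rge])
      have yf: "cls S r (gp p0 hor ver (2 * i) ?b) \<in> filt S r (c i)" unfolding c_def by (rule g.G_filt_row)
      have "tipl S r (r (Hc (hor i m)) - 1) (f (cls S r (gp p0 hor ver (2 * i) ?b)))"
        by (rule tipl_pres[OF f(1) f(2) yf t])
      then have "tipl S r (r (Hc (hor i m)) - 1) (cls S r (gp p0 hor ver (2 * j) ?b))" using row by simp
      then have "r (Hc (hor i m)) - 1 = r (Hc (hor j m)) - 1" by (rule tipl_Mid[OF pj])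
      then have "r (Hc (hor i m)) = r (Hc (hor j m))" using rge[of "Hc (hor i m)"] rge[of "Hc (hor j m)"] by simp
      then have "Hc (hor i m) = Hc (hor j m)" using rinj unfolding inj_def by blast
      then show ?thesis by simp
    qed
    have "map (hor i) [0..<N] = map (hor j) [0..<N]" using col by simp
    moreover have "inj_on (\<lambda>k. map (hor k) [0..<N]) {..<2 ^ N}" using words by blast
    ultimately show False using ij unfolding inj_on_def by blast
  qed
qed


end
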